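(* Let $D$ be a pv-monoid (idempotent, with symmetric valuation function), $P$ a nonempty finite set of ports, and $\zeta,\zeta_1,\zeta_2,\zeta_3\in PCL(D,P)$. Then: (i) $\zeta\uplus 0\equiv 0\equiv 0\uplus\zeta$. (ii) If $\otimes$ is commutative, then $\zeta_1\uplus\zeta_2\equiv\zeta_2\uplus\zeta_1$. (iii) If $D$ is associative and $\oplus$-distributive, then $(\zeta_1\uplus\zeta_2)\uplus\zeta_3\equiv\zeta_1\uplus(\zeta_2\uplus\zeta_3)$. (iv) If $D$ is left-$\oplus$-distributive, then $\zeta\otimes(\zeta_1\oplus\zeta_2)\equiv(\zeta\otimes\zeta_1)\oplus(\zeta\otimes\zeta_2)$. (v) If $D$ is right-$\oplus$-distributive, then $(\zeta_1\oplus\zeta_2)\otimes\zeta\equiv(\zeta_1\otimes\zeta)\oplus(\zeta_2\otimes\zeta)$.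
   Context: A valuation monoid $(D,\oplus,\mathrm{val},0)$ consists of a commutative monoid $(D,\oplus,0)$ and a map $\mathrm{val}:D^+\to D$ ($D^+$ = nonempty finite sequences over $D$) with $\mathrm{val}(d)=d$ and $\mathrm{val}(d_1,\dots,d_n)=0$ whenever some $d_i=0$. A pv-monoid $(D,\oplus,\mathrm{val},\otimes,0,1)$ is a valuation monoid with a binary operation $\otimes$ and an element $1$ such that $\mathrm{val}(1,\dots,1)=1$ for any $n\ge1$ arguments, $0\otimes d=d\otimes0=0$, $1\otimes d=d\otimes1=d$. Standing assumption: $D$ is idempotent ($d\oplus d=d$) and $\mathrm{val}$ is symmetric. $D$ is left-$\oplus$-distributive if $d\otimes(d_1\oplus d_2)=(d\otimes d_1)\oplus(d\otimes d_2)$, right-$\oplus$-distributive if $(d_1\oplus d_2)\otimes d=(d_1\otimes d)\oplus(d_2\otimes d)$, $\oplus$-distributive if both; associative if $\otimes$ is associative. $I(P)$ is the set of nonempty subsets of $P$, $C(P)$ the set of nonempty subsets of $I(P)$. PIL formulas: $\phi::=true\mid p\mid\overline{\phi}\mid\phi\vee\phi$ ($p\in P$), $\alpha\models_i p$ iff $p\in\alpha$, other connectives as usual. PCL formulas: $f::=true\mid\phi\mid\neg f\mid f\sqcup f\mid f+f$; $\gamma\models\phi$ iff every $\alpha\in\gamma$ satisfies $\phi$; $\neg,\sqcup$ are complement and union; $\gamma\models f_1+f_2$ iff $\gamma=\gamma_1\cup\gamma_2$ with $\gamma_1,\gamma_2\in C(P)$, $\gamma_1\models f_1,\gamma_2\models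 f_2$. w$_{\text{pvm}}$PCL formulas ($PCL(D,P)$): $\zeta::=d\mid f\mid\zeta\oplus\zeta\mid\zeta\otimes\zeta\mid\zeta\uplus\zeta\mid *\zeta$; semantics $\|\zeta\|:C(P)\to D$: $\|d\|(\gamma)=d$; $\|f\|(\gamma)\in\{0,1\}$ is $1$ iff $\gamma\models f$; $\oplus,\otimes$ pointwise; $\|\zeta_1\uplus\zeta_2\|(\gamma)=\bigoplus(\|\zeta_1\|(\gamma_1)\otimes\|\zeta_2\|(\gamma_2))$ over disjoint $\gamma_1,\gamma_2\in C(P)$ with union $\gamma$; $\|*\zeta\|(\gamma)=\bigoplus_{n>0}\bigoplus\mathrm{val}(\|\zeta\|(\gamma_1),\dots,\|\zeta\|(\gamma_n))$ over pairwise disjoint $\gamma_1,\dots,\gamma_n\in C(P)$ with union $\gamma$. $\zeta\equiv\zeta'$ iff $\|\zeta\|=\|\zeta'\|$. An empty $\oplus$-sum is $0$. *)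

theory Defs
  imports Main "HOL-Library.Multiset"
begin

text \<open>A pv-monoid whose carrier is the whole type 'd.  The valuation function
  is given on lists; only its values on nonempty lists are relevant.\<close>

record 'd pvm =
  pplus  :: "'d \<Rightarrow> 'd \<Rightarrow> 'd"
  pval   :: "'d list \<Rightarrow> 'd"
  ptimes :: "'d \<Rightarrow> 'd \<Rightarrow> 'd"
  pzero  :: 'd
  pone   :: 'd

definition valuation_monoid :: "'d pvm \<Rightarrow> bool" where
  "valuation_monoid D \<longleftrightarrow>
     (\<forall>a b c. pplus D (pplus D a b) c = pplus D a (pplus D b c)) \<and>
     (\<forall>a b. pplus D a b = pplus D b a) \<and>
     (\<forall>a. pplus D (pzero D) a = a) \<and>
     (\<forall>d. pval D [d] = d) \<and>
     (\<forall>ds. ds \<noteq> [] \<and> pzero D \<in> set ds \<longrightarrow> pval D ds = pzero D)"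

definition pv_monoid :: "'d pvm \<Rightarrow> bool" where
  "pv_monoid D \<longleftrightarrow> valuation_monoid D \<and>
     (\<forall>n\<ge>1. pval D (replicate n (pone D)) = pone D) \<and>
     (\<forall>d. ptimes D (pzero D) d = pzero D \<and> ptimes D d (pzero D) = pzero D) \<and>
     (\<forall>d. ptimes D (pone D) d = d \<and> ptimes D d (pone D) = d)"

definition idempotent_pvm :: "'d pvm \<Rightarrow> bool" where
  "idempotent_pvm D \<longleftrightarrow> (\<forall>d. pplus D d d = d)"

definition symmetric_val :: "'d pvm \<Rightarrow> bool" where
  "symmetric_val D \<longleftrightarrow> (\<forall>xs ys. xs \<noteq> [] \<and> mset xs = mset ys \<longrightarrow> pval D xs = pval D ys)"

definition left_distrib :: "'d pvm \<Rightarrow> bool" where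
  "left_distrib D \<longleftrightarrow> (\<forall>d d1 d2. ptimes D d (pplus D d1 d2) = pplus D (ptimes D d d1) (ptimes D d d2))"

definition right_distrib :: "'d pvm \<Rightarrow> bool" where
  "right_distrib D \<longleftrightarrow> (\<forall>d d1 d2. ptimes D (pplus D d1 d2) d = pplus D (ptimes D d1 d) (ptimes D d2 d))"

definition plus_distrib :: "'d pvm \<Rightarrow> bool" where
  "plus_distrib D \<longleftrightarrow> left_distrib D \<and> right_distrib D"

definition assoc_pvm :: "'d pvm \<Rightarrow> bool" where
  "assoc_pvm D \<longleftrightarrow> (\<forall>a b c. ptimes D (ptimes D a b) c = ptimes D a (ptimes D b c))"

definition comm_times :: "'d pvm \<Rightarrow> bool" where
  "comm_times D \<longleftrightarrow> (\<forall>a b. ptimes D a b = ptimes D b a)"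

definition bigplus :: "'d pvm \<Rightarrow> ('a \<Rightarrow> 'd) \<Rightarrow> 'a set \<Rightarrow> 'd" where
  "bigplus D f A = Finite_Set.fold (\<lambda>x acc. pplus D (f x) acc) (pzero D) A"

definition IP :: "'p set \<Rightarrow> 'p set set" where
  "IP P = {a. a \<subseteq> P \<and> a \<noteq> {}}"

definition CP :: "'p set \<Rightarrow> 'p set set set" where
  "CP P = {g. g \<subseteq> IP P \<and> g \<noteq> {}}"

datatype 'p pil = PIL_True | PIL_Port 'p | PIL_Neg "'p pil" | PIL_Or "'p pil" "'p pil"

primrec pil_sat :: "'p set \<Rightarrow> 'p pil \<Rightarrow> bool" where
  "pil_sat \<alpha> PIL_True = True"
| "pil_sat \<alpha> (PIL_Port p) = (p \<in> \<alpha>)"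
| "pil_sat \<alpha> (PIL_Neg \<phi>) = (\<not> pil_sat \<alpha> \<phi>)"
| "pil_sat \<alpha> (PIL_Or \<phi> \<psi>) = (pil_sat \<alpha> \<phi> \<or> pil_sat \<alpha> \<psi>)"

datatype 'p pcl = PCL_True | PCL_PIL "'p pil" | PCL_Neg "'p pcl"
  | PCL_Union "'p pcl" "'p pcl" | PCL_Plus "'p pcl" "'p pcl"

primrec pcl_sat :: "'p set \<Rightarrow> 'p set set \<Rightarrow> 'p pcl \<Rightarrow> bool" where
  "pcl_sat P \<gamma> PCL_True = True"
| "pcl_sat P \<gamma> (PCL_PIL \<phi>) = (\<forall>\<alpha>\<in>\<gamma>. pil_sat \<alpha> \<phi>)"
| "pcl_sat P \<gamma> (PCL_Neg f) = (\<not> pcl_sat P \<gamma> f)"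
| "pcl_sat P \<gamma> (PCL_Union f g) = (pcl_sat P \<gamma> f \<or> pcl_sat P \<gamma> g)"
| "pcl_sat P \<gamma> (PCL_Plus f g) =
     (\<exists>\<gamma>1\<in>CP P. \<exists>\<gamma>2\<in>CP P. \<gamma> = \<gamma>1 \<union> \<gamma>2 \<and> pcl_sat P \<gamma>1 f \<and> pcl_sat P \<gamma>2 g)"

datatype ('d, 'p) wpcl =
    W_Const 'd
  | W_PCL "'p pcl"
  | W_Plus "('d, 'p) wpcl" "('d, 'p) wpcl"
  | W_Times "('d, 'p) wpcl" "('d, 'p) wpcl"
  | W_Coal "('d, 'p) wpcl" "('d, 'p) wpcl"
  | W_Star "('d, 'p) wpcl"

definition splits2 :: "'p set \<Rightarrow> 'p set set \<Rightarrow> ('p set set \<times> 'p set set) set" where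
  "splits2 P \<gamma> = {(\<gamma>1, \<gamma>2). \<gamma>1 \<in> CP P \<and> \<gamma>2 \<in> CP P \<and> \<gamma>1 \<inter> \<gamma>2 = {} \<and> \<gamma>1 \<union> \<gamma>2 = \<gamma>}"

definition splitsN :: "'p set \<Rightarrow> 'p set set \<Rightarrow> nat \<Rightarrow> 'p set set list set" where
  "splitsN P \<gamma> n = {gs. length gs = n \<and> set gs \<subseteq> CP P \<and>
      (\<forall>i<n. \<forall>j<n. i \<noteq> j \<longrightarrow> gs ! i \<inter> gs ! j = {}) \<and> \<Union>(set gs) = \<gamma>}"

primrec wsem :: "'d pvm \<Rightarrow> 'p set \<Rightarrow> ('d, 'p) wpcl \<Rightarrow> 'p set set \<Rightarrow> 'd" where
  "wsem D P (W_Const d) \<gamma> = d"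
| "wsem D P (W_PCL f) \<gamma> = (if pcl_sat P \<gamma> f then pone D else pzero D)"
| "wsem D P (W_Plus z1 z2) \<gamma> = pplus D (wsem D P z1 \<gamma>) (wsem D P z2 \<gamma>)"
| "wsem D P (W_Times z1 z2) \<gamma> = ptimes D (wsem D P z1 \<gamma>) (wsem D P z2 \<gamma>)"
| "wsem D P (W_Coal z1 z2) \<gamma> =
     bigplus D (\<lambda>(\<gamma>1, \<gamma>2). ptimes D (wsem D P z1 \<gamma>1) (wsem D P z2 \<gamma>2)) (splits2 P \<gamma>)"
| "wsem D P (W_Star z) \<gamma> =
     bigplus D (\<lambda>n. bigplus D (\<lambda>gs. pval D (map (wsem D P z) gs)) (splitsN P \<gamma> n))
       {1..card \<gamma>}"

definition wequiv :: "'d pvm \<Rightarrow> 'p set \<Rightarrow> ('d, 'p) wpcl \<Rightarrow> ('d, 'p) wpcl \<Rightarrow> bool" where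
  "wequiv D P z z' \<longleftrightarrow> (\<forall>\<gamma>\<in>CP P. wsem D P z \<gamma> = wsem D P z' \<gamma>)"

end

theory Submission
  imports Defs
begin

locale pvm_ctx =
  fixes D :: "'d pvm"
  assumes pvm: "pv_monoid D"
begin

lemma cm: "comm_monoid (pplus D) (pzero D)"
  using pvm unfolding pv_monoid_def valuation_monoid_def
  by unfold_locales metis+

sublocale S: comm_monoid_set "pplus D" "pzero D"
  by (rule comm_monoid_set.intro[OF cm])

lemma bigplus_F: "bigplus D g A = S.F g A"
  unfolding bigplus_def S.eq_fold by (simp add: comp_def)

lemma t0l[simp]: "ptimes D (pzero D) d = pzero D"
  and t0r[simp]: "ptimes D d (pzero D) = pzero D"
  using pvm unfolding pv_monoid_def by auto

lemma ldist_F: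
  assumes "left_distrib D"
  shows "ptimes D d (S.F g A) = S.F (\<lambda>x. ptimes D d (g x)) A"
proof (cases "finite A")
  case True
  then show ?thesis
    by (induction A rule: finite_induct)
      (use assms in \<open>auto simp: left_distrib_def\<close>)
qed simp

lemma rdist_F:
  assumes "right_distrib D"
  shows "ptimes D (S.F g A) d = S.F (\<lambda>x. ptimes D (g x) d) A"
proof (cases "finite A")
  case True
  then show ?thesis
    by (induction A rule: finite_induct)
      (use assms in \<open>auto simp: right_distrib_def\<close>)
qed simp

end

lemma finite_CP: "finite P \<Longrightarrow> finite (CP P)"
  unfolding CP_def IP_def
  by (rule finite_subset[where B="Pow (Pow P)"]) auto

lemma finite_splits2: "finite P \<Longrightarrow> finite (splits2 P g)"
  unfolding splits2_def
  by (rule finite_subset[where B="CP P \<times> CP P"]) (auto simp: finite_CP)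

lemma CP_Un: "a \<in> CP P \<Longrightarrow> b \<in> CP P \<Longrightarrow> a \<union> b \<in> CP P"
  unfolding CP_def by auto

theorem mainTheorem3:
  fixes D :: "'d pvm" and P :: "'p set" and z z1 z2 z3 :: "('d, 'p) wpcl"
  assumes "pv_monoid D" and "idempotent_pvm D" and "symmetric_val D"
    and "finite P" and "P \<noteq> {}"
  shows "(wequiv D P (W_Coal z (W_Const (pzero D))) (W_Const (pzero D))
           \<and> wequiv D P (W_Const (pzero D)) (W_Coal (W_Const (pzero D)) z))
    \<and> (comm_times D \<longrightarrow> wequiv D P (W_Coal z1 z2) (W_Coal z2 z1))
    \<and> (assoc_pvm D \<and> plus_distrib D \<longrightarrow>
           wequiv D P (W_Coal (W_Coal z1 z2) z3) (W_Coal z1 (W_Coal z2 z3)))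
    \<and> (left_distrib D \<longrightarrow>
           wequiv D P (W_Times z (W_Plus z1 z2)) (W_Plus (W_Times z z1) (W_Times z z2)))
    \<and> (right_distrib D \<longrightarrow>
           wequiv D P (W_Times (W_Plus z1 z2) z) (W_Plus (W_Times z1 z) (W_Times z2 z)))"
proof -
  interpret pvm_ctx D by unfold_locales (rule assms(1))
  note fin = finite_splits2[OF assms(4)]
  have i: "wequiv D P (W_Coal z (W_Const (pzero D))) (W_Const (pzero D))
           \<and> wequiv D P (W_Const (pzero D)) (W_Coal (W_Const (pzero D)) z)"
    unfolding wequiv_def by (auto simp: bigplus_F intro!: S.neutral)
  have ii: "wequiv D P (W_Coal z1 z2) (W_Coal z2 z1)" if c: "comm_times D"
    unfolding wequiv_def
  proof (intro ballI)
    fix g assume "g \<in> CP P"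
    show "wsem D P (W_Coal z1 z2) g = wsem D P (W_Coal z2 z1) g"
      unfolding wsem.simps bigplus_F
      by (rule S.reindex_bij_witness[where i="\<lambda>(a,b). (b,a)" and j="\<lambda>(a,b). (b,a)"])
        (use c in \<open>auto simp: splits2_def comm_times_def\<close>)
  qed
  have iii: "wequiv D P (W_Coal (W_Coal z1 z2) z3) (W_Coal z1 (W_Coal z2 z3))"
    if a: "assoc_pvm D" and pd: "plus_distrib D"
    unfolding wequiv_def
  proof (intro ballI)
    fix g assume "g \<in> CP P"
    define A where "A = wsem D P z1"
    define B where "B = wsem D P z2"
    define C where "C = wsem D P z3"
    define T where "T = {(g1,g2,g3). g1 \<in> CP P \<and> g2 \<in> CP P \<and> g3 \<in> CP P \<and>
       g1 \<inter> g2 = {} \<and> g1 \<inter> g3 = {} \<and> g2 \<inter> g3 = {} \<and> g1 \<union> g2 \<union> g3 = g}"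
    have ld: "left_distrib D" and rd: "right_distrib D" using pd by (auto simp: plus_distrib_def)
    have "wsem D P (W_Coal (W_Coal z1 z2) z3) g =
      S.F (\<lambda>(g12, g3). S.F (\<lambda>(g1, g2). ptimes D (ptimes D (A g1) (B g2)) (C g3)) (splits2 P g12)) (splits2 P g)"
      unfolding wsem.simps bigplus_F A_def B_def C_def
      by (rule S.cong[OF refl]) (auto simp: rdist_F[OF rd] case_prod_beta)
    also have "\<dots> = S.F (\<lambda>p. S.F (\<lambda>q. ptimes D (ptimes D (A (fst q)) (B (snd q))) (C (snd p))) (splits2 P (fst p))) (splits2 P g)"
      by (rule S.cong[OF refl]) (auto simp: case_prod_beta)
    also have "\<dots> = S.F (case_prod (\<lambda>p q. ptimes D (ptimes D (A (fst q)) (B (snd q))) (C (snd p))))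
        (SIGMA p:splits2 P g. splits2 P (fst p))"
      by (rule S.Sigma) (auto simp: fin)
    also have "\<dots> = S.F (\<lambda>(g1,g2,g3). ptimes D (ptimes D (A g1) (B g2)) (C g3)) T"
      by (rule S.reindex_bij_witness[where i="\<lambda>(g1,g2,g3). ((g1 \<union> g2, g3), (g1, g2))"
            and j="\<lambda>((g12,g3),(g1,g2)). (g1,g2,g3)"])
        (auto simp: splits2_def T_def CP_Un)
    also have "\<dots> = S.F (\<lambda>(g1,g2,g3). ptimes D (A g1) (ptimes D (B g2) (C g3))) T"
      using a by (simp add: assoc_pvm_def case_prod_beta)
    also have "\<dots> = S.F (case_prod (\<lambda>p q. ptimes D (A (fst p)) (ptimes D (B (fst q)) (C (snd q)))))
        (SIGMA p:splits2 P g. splits2 P (snd p))"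
      by (rule S.reindex_bij_witness[where j="\<lambda>(g1,g2,g3). ((g1, g2 \<union> g3), (g2, g3))"
            and i="\<lambda>((g1,g23),(g2,g3)). (g1,g2,g3)"])
        (auto simp: splits2_def T_def CP_Un)
    also have "\<dots> = S.F (\<lambda>p. S.F (\<lambda>q. ptimes D (A (fst p)) (ptimes D (B (fst q)) (C (snd q)))) (splits2 P (snd p))) (splits2 P g)"
      by (rule S.Sigma[symmetric]) (auto simp: fin)
    also have "\<dots> = wsem D P (W_Coal z1 (W_Coal z2 z3)) g"
      unfolding wsem.simps bigplus_F A_def B_def C_def
      by (rule S.cong[OF refl]) (auto simp: ldist_F[OF ld] case_prod_beta)
    finally show "wsem D P (W_Coal (W_Coal z1 z2) z3) g = wsem D P (W_Coal z1 (W_Coal z2 z3)) g" .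
  qed
  have iv: "wequiv D P (W_Times z (W_Plus z1 z2)) (W_Plus (W_Times z z1) (W_Times z z2))"
    if "left_distrib D" using that by (simp add: wequiv_def left_distrib_def)
  have v: "wequiv D P (W_Times (W_Plus z1 z2) z) (W_Plus (W_Times z1 z) (W_Times z2 z))"
    if "right_distrib D" using that by (simp add: wequiv_def right_distrib_def)
  show ?thesis using i ii iii iv v by blast
qed

end
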